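(* There exists no real polynomial $P(x)=a_{11}x^{11}+a_{10}x^{10}+\cdots+a_0$ with $a_{11}>0$, $a_{10},a_9,a_8,a_7,a_6<0$, $a_5,a_4,a_3,a_2,a_1>0$, $a_0<0$, which has a single positive root, this root being simple, negative roots of total multiplicity $8$ (counted with multiplicity), and a pair of complex conjugate non-real roots with nonpositive real part. *)

theory Defs
  imports Complex_Main "HOL-Computational_Algebra.Polynomial"
begin

end

theory Submission imports Defs "HOL-Computational_Algebra.Fundamental_Theorem_Algebra" begin

lemma mop_mult: "map_poly (of_real :: real \<Rightarrow> complex) (p*q) = map_poly of_real p * map_poly of_real q"
  by (rule poly_eqI) (simp add: coeff_map_poly coeff_mult)

lemma mop_power: "map_poly (of_real::real\<Rightarrow>complex) (p^n) = (map_poly of_real p)^n"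
  by (induction n) (simp_all add: mop_mult)

lemma mop_linear: "map_poly (of_real::real\<Rightarrow>complex) [:-x,1:] = [:-of_real x, 1:]"
  by (simp add: map_poly_pCons)

lemma poly_mop: "poly (map_poly (of_real::real\<Rightarrow>complex) p) (of_real x) = of_real (poly p x)"
  by (induction p) (auto simp: map_poly_pCons)

lemma order_mop_ge:
  assumes "P \<noteq> 0"
  shows "order x P \<le> order (of_real x) (map_poly (of_real::real\<Rightarrow>complex) P)"
proof -
  obtain R where R: "P = [:-x,1:]^order x P * R" using order_1 dvdE by metis
  then have "map_poly (of_real::real\<Rightarrow>complex) P = [:-of_real x,1:]^order x P * map_poly of_real R"
    by (metis mop_mult mop_power mop_linear)
  then have d: "[:-of_real x,1:]^order x P dvd map_poly (of_real::real\<Rightarrow>complex) P" by simp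
  have "map_poly (of_real::real\<Rightarrow>complex) P \<noteq> 0" using assms
    by (simp add: map_poly_eq_0_iff)
  then show ?thesis using d order_divides by blast
qed

lemma lin_mult_coeff: fixes x :: "'a::comm_ring_1" shows "coeff ([:-x,1:] * q) n = (if n = 0 then 0 else coeff q (n-1)) - x * coeff q n"
  by (cases n) (simp_all add: algebra_simps)

lemma vieta_top:
  fixes M :: "'a::field multiset"
  shows "coeff (\<Prod>x\<in>#M. [:-x,1:]) (size M) = 1 \<and> (\<forall>n>size M. coeff (\<Prod>x\<in>#M. [:-x,1:]) n = 0) \<and>
    (M \<noteq> {#} \<longrightarrow> coeff (\<Prod>x\<in>#M. [:-x,1:]) (size M - 1) = - sum_mset M)"
proof (induction M)
  case empty
  then show ?case by (simp add: coeff_1)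
next
  case (add x M)
  define Q where "Q = (\<Prod>x\<in>#M. [:-x,1:])"
  have e: "(\<Prod>y\<in>#add_mset x M. [:-y,1:]) = [:-x,1:] * Q" by (simp add: Q_def)
  have c: "\<And>n. coeff (\<Prod>y\<in>#add_mset x M. [:-y,1:]) n = (if n=0 then 0 else coeff Q (n-1)) - x * coeff Q n"
    unfolding e by (rule lin_mult_coeff)
  show ?case unfolding c using add.IH[folded Q_def]
    by (cases "M = {#}") (auto simp: Q_def)
qed

lemma vieta_low:
  fixes M :: "'a::field multiset"
  shows "0 \<notin># M \<Longrightarrow> coeff (\<Prod>x\<in>#M. [:-x,1:]) 1 = - coeff (\<Prod>x\<in>#M. [:-x,1:]) 0 * (\<Sum>x\<in>#M. 1/x)"
proof (induction M)
  case empty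
  then show ?case by simp
next
  case (add x M)
  define Q where "Q = (\<Prod>x\<in>#M. [:-x,1:])"
  have e: "(\<Prod>y\<in>#add_mset x M. [:-y,1:]) = [:-x,1:] * Q" by (simp add: Q_def)
  have c: "\<And>n. coeff (\<Prod>y\<in>#add_mset x M. [:-y,1:]) n = (if n=0 then 0 else coeff Q (n-1)) - x * coeff Q n"
    unfolding e by (rule lin_mult_coeff)
  show ?case unfolding c using add.IH[folded Q_def] add.prems
    by (auto simp: field_simps)
qed

lemma sum_count_le:
  assumes "finite S"
  shows "(\<Sum>s\<in>S. count M s) \<le> size M"
proof -
  have "(\<Sum>s\<in>S. count M s) = (\<Sum>s\<in>S \<inter> set_mset M. count M s)"
    using assms by (intro sum.mono_neutral_right) auto
  also have "\<dots> \<le> (\<Sum>s\<in>set_mset M. count M s)"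
    by (intro sum_mono2) auto
  also have "\<dots> = size M" by (simp add: size_multiset_overloaded_eq)
  finally show ?thesis .
qed

lemma re_sum_nonpos: "(\<forall>a\<in>#A. Re a \<le> 0) \<Longrightarrow> Re (sum_mset A) \<le> 0"
  by (induction A) auto

lemma re_inv_sum_nonpos: "(\<forall>a\<in>#A. Re a \<le> 0) \<Longrightarrow> Re (\<Sum>x\<in>#A. 1/x) \<le> 0"
proof (induction A)
  case empty
  then show ?case by simp
next
  case (add x A)
  have "Re (1/x) \<le> 0" using add.prems
    by (simp add: Re_divide divide_nonpos_nonneg)
  then show ?case using add by auto
qed


theorem lemma5:
  shows "\<not> (\<exists>P :: real poly.
      degree P = 11 \<and>
      coeff P 11 > 0 \<and>
      (\<forall>i\<in>{6..10}. coeff P i < 0) \<and>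
      (\<forall>i\<in>{1..5}. coeff P i > 0) \<and>
      coeff P 0 < 0 \<and>
      (\<exists>!x. x > 0 \<and> poly P x = 0) \<and>
      (\<forall>x. x > 0 \<and> poly P x = 0 \<longrightarrow> order x P = 1) \<and>
      (\<Sum>x\<in>{x. x < 0 \<and> poly P x = 0}. order x P) = 8 \<and>
      (\<exists>z. Im z \<noteq> 0 \<and> Re z \<le> 0 \<and> poly (map_poly complex_of_real P) z = 0))"
proof
  assume "\<exists>P :: real poly.
      degree P = 11 \<and>
      coeff P 11 > 0 \<and>
      (\<forall>i\<in>{6..10}. coeff P i < 0) \<and>
      (\<forall>i\<in>{1..5}. coeff P i > 0) \<and>
      coeff P 0 < 0 \<and>
      (\<exists>!x. x > 0 \<and> poly P x = 0) \<and>
      (\<forall>x. x > 0 \<and> poly P x = 0 \<longrightarrow> order x P = 1) \<and>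
      (\<Sum>x\<in>{x. x < 0 \<and> poly P x = 0}. order x P) = 8 \<and>
      (\<exists>z. Im z \<noteq> 0 \<and> Re z \<le> 0 \<and> poly (map_poly complex_of_real P) z = 0)"
  then obtain P :: "real poly" where deg: "degree P = 11" and c11: "coeff P 11 > 0"
    and cneg: "\<forall>i\<in>{6..10}. coeff P i < 0" and cpos: "\<forall>i\<in>{1..5}. coeff P i > 0"
    and c0: "coeff P 0 < 0" and uq: "\<exists>!x. x > 0 \<and> poly P x = 0"
    and negsum: "(\<Sum>x\<in>{x. x < 0 \<and> poly P x = 0}. order x P) = 8"
    and zex: "\<exists>z. Im z \<noteq> 0 \<and> Re z \<le> 0 \<and> poly (map_poly complex_of_real P) z = 0"
    by blast
  obtain z where zim: "Im z \<noteq> 0" and zre: "Re z \<le> 0" and zr: "poly (map_poly complex_of_real P) z = 0"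
    using zex by blast
  obtain x0 where x0: "x0 > 0" "poly P x0 = 0" and x0u: "\<And>y. y > 0 \<Longrightarrow> poly P y = 0 \<Longrightarrow> y = x0"
    using uq by blast
  have c10: "coeff P 10 < 0" using cneg by simp
  have c1: "coeff P 1 > 0" using cpos by simp
  have P0: "P \<noteq> 0" using deg by auto
  define Pc where "Pc = map_poly (of_real::real\<Rightarrow>complex) P"
  have coeffPc: "\<And>n. coeff Pc n = of_real (coeff P n)" by (simp add: Pc_def coeff_map_poly)
  have degPc: "degree Pc = 11" using deg by (simp add: Pc_def degree_map_poly)
  have Pc0: "Pc \<noteq> 0" using degPc by auto
  define M where "M = proots Pc"
  have sizeM: "size M = 11" using size_proots_complex[of Pc] degPc by (simp add: M_def)
  have inM: "\<And>a. a \<in># M \<longleftrightarrow> poly Pc a = 0" using Pc0 by (simp add: M_def)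
  have cntM: "\<And>a. count M a = order a Pc" using Pc0 by (simp add: M_def)
  have polyPc: "\<And>x. poly Pc (of_real x) = of_real (poly P x)" by (simp add: Pc_def poly_mop)
  have cordge: "\<And>x. order x P \<le> count M (of_real x)"
    using order_mop_ge[OF P0] by (simp add: cntM Pc_def)
  have zM: "z \<in># M" using zr inM Pc_def by simp
  have czM: "cnj z \<in># M"
  proof -
    have "poly Pc (cnj z) = 0 \<longleftrightarrow> poly Pc z = 0"
      by (rule real_poly_cnj_root_iff) (simp add: coeffPc)
    then show ?thesis using zr inM Pc_def by simp
  qed
  define x0c where "x0c = complex_of_real x0"
  have x0M: "x0c \<in># M" using x0 inM polyPc x0c_def by simp
  define Q where "Q = (\<Prod>x\<in>#M. [:-x,1:])"
  have decomp: "smult (lead_coeff Pc) Q = Pc" unfolding Q_def M_def by (rule complex_poly_decompose_multiset)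
  have lc: "lead_coeff Pc = of_real (coeff P 11)" using degPc coeffPc by simp
  have cQ: "\<And>n. of_real (coeff P n) = of_real (coeff P 11) * coeff Q n"
    by (metis coeffPc coeff_smult decomp lc)
  define N where "N = {x. x < 0 \<and> poly P x = 0}"
  have finN: "finite N" using negsum N_def by (metis sum.infinite zero_neq_numeral)
  have sumN: "(\<Sum>x\<in>N. count M (of_real x)) \<ge> 8"
    using sum_mono[of N "\<lambda>x. order x P" "\<lambda>x. count M (of_real x)"] cordge negsum N_def by simp
  define T where "T = (of_real :: real \<Rightarrow> complex) ` N"
  have finT: "finite T" using finN T_def by simp
  have sumT: "(\<Sum>s\<in>T. count M s) \<ge> 8"
    using sumN unfolding T_def by (subst sum.reindex) (auto simp: inj_on_def)
  have Tprop: "\<And>t. t \<in> T \<Longrightarrow> Im t = 0 \<and> Re t < 0" using T_def N_def by auto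
  define S where "S = insert x0c (insert z (insert (cnj z) T))"
  have finS: "finite S" using finT S_def by simp
  have sumS: "(\<Sum>s\<in>S. count M s) = count M x0c + count M z + count M (cnj z) + (\<Sum>s\<in>T. count M s)"
  proof -
    have a: "cnj z \<notin> T" using Tprop zim by fastforce
    have b: "z \<notin> insert (cnj z) T" using Tprop zim by (auto simp: complex_eq_iff)
    have c: "x0c \<notin> insert z (insert (cnj z) T)"
    proof
      assume h: "x0c \<in> insert z (insert (cnj z) T)"
      have "Im x0c = 0" "Re x0c > 0" using x0 x0c_def by auto
      then show False using h Tprop zim by fastforce
    qed
    show ?thesis unfolding S_def using a b c finT by simp
  qed
  have cz1: "count M z \<ge> 1" "count M (cnj z) \<ge> 1" "count M x0c \<ge> 1"
    using zM czM x0M by auto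
  have cx0: "count M x0c = 1"
    using sum_count_le[OF finS, of M] sumS sizeM sumT cz1 by linarith
  have claimA: "Re a \<le> 0" if aM: "a \<in># M" and ax: "a \<noteq> x0c" for a
  proof (rule ccontr)
    assume "\<not> Re a \<le> 0"
    then have ra: "Re a > 0" by simp
    show False
    proof (cases "Im a = 0")
      case True
      then have "a = of_real (Re a)" by (simp add: complex_eq_iff)
      then have "poly P (Re a) = 0" using aM inM polyPc by (metis of_real_eq_0_iff)
      then have "Re a = x0" using x0u ra by blast
      then show False using ax \<open>a = of_real (Re a)\<close> x0c_def by simp
    next
      case False
      have "a \<notin> S" using S_def Tprop ax ra zre False by auto
      then have "(\<Sum>s\<in>insert a S. count M s) = count M a + (\<Sum>s\<in>S. count M s)"
        using finS by simp
      moreover have "count M a \<ge> 1" using aM by simp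
      moreover have "(\<Sum>s\<in>insert a S. count M s) \<le> 11"
        using sum_count_le[of "insert a S" M] finS sizeM by simp
      ultimately show False
        using sumS sumT cz1 by linarith
    qed
  qed
  define M' where "M' = M - {#x0c#}"
  have MM': "M = add_mset x0c M'" using x0M M'_def by simp
  have x0nM': "x0c \<notin># M'"
  proof -
    have "count M' x0c = 0" using cx0 by (simp add: M'_def)
    then show ?thesis by (simp add: not_in_iff)
  qed
  obtain r where rN: "r \<in> N"
  proof -
    have "N \<noteq> {}" using negsum unfolding N_def by (metis sum.empty zero_neq_numeral)
    then show ?thesis using that by blast
  qed
  have r: "r < 0" "poly P r = 0" using rN N_def by auto
  define rc where "rc = complex_of_real r"
  have rcM: "rc \<in># M" using r inM polyPc rc_def by simp
  have rcM': "rc \<in># M'" using rcM MM' r x0 rc_def x0c_def by auto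
  define M'' where "M'' = M' - {#rc#}"
  have MM'': "M' = add_mset rc M''" using rcM' M''_def by simp
  have allM'': "\<forall>a\<in>#M''. Re a \<le> 0"
    using claimA MM' MM'' x0nM' by auto
  have Mdec: "M = add_mset x0c (add_mset rc M'')" using MM' MM'' by simp
  have nz: "0 \<notin># M"
  proof
    assume "0 \<in># M"
    then have "poly Pc 0 = 0" using inM by simp
    then have "poly P 0 = 0" using polyPc[of 0] by simp
    then show False using c0 by (simp add: poly_0_coeff_0)
  qed
  have vt: "coeff Q 10 = - sum_mset M"
    using vieta_top[of M] sizeM by (auto simp: Q_def)
  have vl: "coeff Q 1 = - coeff Q 0 * (\<Sum>x\<in>#M. 1/x)"
    using vieta_low[OF nz] by (simp add: Q_def)
  have s1: "Re (sum_mset M) > 0"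
  proof -
    have "of_real (coeff P 10) = of_real (coeff P 11) * (- sum_mset M)" using cQ[of 10] vt by simp
    then have "Re (complex_of_real (coeff P 10)) = Re (complex_of_real (coeff P 11) * (- sum_mset M))"
      by (rule arg_cong)
    then have "coeff P 10 = coeff P 11 * (- Re (sum_mset M))" by simp
    then show ?thesis using c10 c11 by (smt (verit) mult_nonneg_nonneg)
  qed
  have s2: "Re (\<Sum>x\<in>#M. 1/x) > 0"
  proof -
    have "of_real (coeff P 1) = - (of_real (coeff P 11) * coeff Q 0) * (\<Sum>x\<in>#M. 1/x)"
      using cQ[of 1] vl by simp
    also have "of_real (coeff P 11) * coeff Q 0 = of_real (coeff P 0)" using cQ[of 0] by simp
    finally have "of_real (coeff P 1) = - of_real (coeff P 0) * (\<Sum>x\<in>#M. 1/x)" .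
    then have "Re (complex_of_real (coeff P 1)) = Re (- complex_of_real (coeff P 0) * (\<Sum>x\<in>#M. 1/x))"
      by (rule arg_cong)
    then have "coeff P 1 = - coeff P 0 * Re (\<Sum>x\<in>#M. 1/x)" by simp
    then show ?thesis using c0 c1 by (smt (verit) mult_nonneg_nonpos)
  qed
  have e1: "Re (sum_mset M) \<le> x0 + r"
    using re_sum_nonpos[OF allM''] Mdec x0c_def rc_def by simp
  have q1: "x0 / x0^2 = 1/x0" "r / r^2 = 1/r" using x0 r by (simp_all add: power2_eq_square)
  have e2: "Re (\<Sum>x\<in>#M. 1/x) \<le> 1/x0 + 1/r"
    using re_inv_sum_nonpos[OF allM''] Mdec x0c_def rc_def q1 by (simp add: Re_divide)
  have f1: "x0 > - r" using s1 e1 by simp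
  have f2: "1/x0 > 1/(-r)" using s2 e2 by simp
  then have "inverse (-r) < inverse x0" by (simp add: inverse_eq_divide)
  then have "-r > x0" using x0 r inverse_less_iff_less[of "-r" x0] by simp
  then show False using f1 by simp
qed

end
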